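(* Let $\Gamma=(\Gamma_i)_{i\in\mathit{Agt}}$ be an agent vocabulary profile with each $\Gamma_i$ finite, let $\varphi_0\in\mathcal{L}^{\mathsf{dyn}}$ and let $S_0=((B_i)_i,V)$ be a state in $\mathbf{S}_\Gamma$. Then $(S_0,\mathbf{S}_\Gamma)\models\varphi_0$ iff the quantified Boolean formula $\exists X_s(\mathrm{desc}_{S_0}(X_s)\wedge tr_s(\varphi_0))$ is true.
   Context: Setting. $\mathit{Agt}=\{1,\dots,n\}$; $\mathit{Atm}$ countably infinite, containing special atoms $\mathsf{rew}_i,\mathsf{pun}_i$. $\mathcal{L}_0$: $\alpha::=p\mid\neg\alpha\mid\alpha\wedge\alpha\mid\triangle_i\alpha$. State $S=((B_i)_i,V)$, $B_i\subseteq\mathcal{L}_0$, $V\subseteq\mathit{Atm}$; $S\models p$ iff $p\in V$, Boolean as usual, $S\models\triangle_i\alpha$ iff $\alpha\in B_i$. $S\mathcal{E}_iS'$ iff $S'\models\alpha$ for all $\alpha\in B_i$; $S\mathcal{A}_iS'$ iff $S'\models\alpha$ for some $\alpha$ with $(\alpha\to\mathsf{rew}_i)\in B_i$; $S\mathcal{R}_iS'$ iff $S'\models\alpha$ for some $\alpha$ with $(\alpha\to\mathsf{pun}_i)\in B_i$. $\mathbf{S}_\Gamma$ is the set of states with $B_i\subseteq\Gamma_i$ for all $i$. Programs $\pi::=+_i\alpha\mid-_i\alpha\mid\pi;\pi\mid\pi\cup\pi\mid?\varphi$; $\mathcal{L}^{\mathsf{dyn}}$: $\varphi::=\alpha\mid\neg\varphi\mid\varphi\wedge\varphi\mid\Box_i\varphi\mid\mathcal{A}_i\varphi\mid\mathcal{R}_i\varphi\mid\mathcal{A}^{\mathsf{real}}_i\varphi\mid\mathcal{R}^{\mathsf{real}}_i\varphi\mid[\pi]\varphi$.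 For $S\in U$: $(S,U)\models\alpha$ iff $S\models\alpha$; $(S,U)\models\Box_i\varphi$ iff all $S'\in U$ with $S\mathcal{E}_iS'$ satisfy $\varphi$; $(S,U)\models\mathcal{A}_i\varphi$ (resp. $\mathcal{R}_i\varphi$) iff every $S'\in U$ satisfying $\varphi$ has $S\mathcal{A}_iS'$ (resp. $S\mathcal{R}_iS'$); $(S,U)\models\mathcal{A}^{\mathsf{real}}_i\varphi$ (resp. $\mathcal{R}^{\mathsf{real}}_i\varphi$) iff every $S'\in U$ satisfying $\varphi$ with $S\mathcal{E}_iS'$ has $S\mathcal{A}_iS'$ (resp. $S\mathcal{R}_iS'$); $(S,U)\models[\pi]\varphi$ iff every $S'\in U$ with $S\to^U_\pi S'$ satisfies $\varphi$, where $S\to^U_{+_i\alpha}S'$ iff $V'=V$, $B'_i=B_i\cup\{\alpha\}$, $B'_j=B_j$ ($j\ne i$); $S\to^U_{-_i\alpha}S'$ likewise with $B'_i=B_i\setminus\{\alpha\}$; $;$ is composition through some $S''\in U$; $\cup$ is union; $S\to^U_{?\varphi}S'$ iff $S'=S$ and $(S,U)\models\varphi$. Translation. For abstract symbols $s$ and $\beta\in\mathcal{L}_0$ there are QBF variables $x_{\beta,s}$. $X_s$ is the set of variables $x_{\triangle_i\alpha,s}$, $x_{\triangle_i(\alpha\to\mathsf{rew}_i),s}$, $x_{\triangle_i(\alpha\to\mathsf{pun}_i),s}$ for $i\in\mathit{Agt}$, $\alpha\in\Gamma_i$, and $x_{p,s}$ for atoms $p$ occurring in $\Gamma$ or $\varphi_0$;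 $\forall X_s$/$\exists X_s$ quantify all of them. Macros: $\mathrm{eq}_{\mathrm{prop}}(s,s'):=\bigwedge_p(x_{p,s}\leftrightarrow x_{p,s'})$; $\mathrm{eq}_j(s,s'):=\bigwedge_{\alpha\in\Gamma_j}(x_{\triangle_j\alpha,s}\leftrightarrow x_{\triangle_j\alpha,s'})$; $\mathrm{eq}^{+\alpha}_i(s,s'):=x_{\triangle_i\alpha,s'}\wedge\bigwedge_{\beta\in\Gamma_i,\beta\ne\alpha}(x_{\triangle_i\beta,s}\leftrightarrow x_{\triangle_i\beta,s'})$; $\mathrm{eq}^{-\alpha}_i(s,s'):=\neg x_{\triangle_i\alpha,s'}\wedge\bigwedge_{\beta\in\Gamma_i,\beta\ne\alpha}(x_{\triangle_i\beta,s}\leftrightarrow x_{\triangle_i\beta,s'})$. $tr_s$: $tr_s(p)=x_{p,s}$; $tr_s(\neg\varphi)=\neg tr_s(\varphi)$; $tr_s(\varphi\wedge\psi)=tr_s(\varphi)\wedge tr_s(\psi)$; $tr_s(\triangle_i\alpha)=x_{\triangle_i\alpha,s}$ if $\alpha\in\Gamma_i$, else $\bot$; $tr_s(\Box_i\varphi)=\forall X_{s''}(E_{i,s,s''}\to tr_{s''}(\varphi))$; $tr_s(\mathcal{A}_i\varphi)=\forall X_{s''}(tr_{s''}(\varphi)\to A_{i,s,s''})$; $tr_s(\mathcal{R}_i\varphi)=\forall X_{s''}(tr_{s''}(\varphi)\to R_{i,s,s''})$; $tr_s(\mathcal{A}^{\mathsf{real}}_i\varphi)=\forall X_{s''}(tr_{s''}(\varphi)\wedge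 E_{i,s,s''}\to A_{i,s,s''})$; $tr_s(\mathcal{R}^{\mathsf{real}}_i\varphi)=\forall X_{s''}(tr_{s''}(\varphi)\wedge E_{i,s,s''}\to R_{i,s,s''})$; $tr_s([\pi]\varphi)=\forall X_{s''}(tr^{\mathrm{prog}}_{s,s''}(\pi)\to tr_{s''}(\varphi))$; where $E_{i,s,s''}:=\bigwedge_{\alpha\in\Gamma_i}(x_{\triangle_i\alpha,s}\to tr_{s''}(\alpha))$, $A_{i,s,s''}:=\bigvee_{(\alpha\to\mathsf{rew}_i)\in\Gamma_i}(x_{\triangle_i(\alpha\to\mathsf{rew}_i),s}\wedge tr_{s''}(\alpha))$, $R_{i,s,s''}:=\bigvee_{(\alpha\to\mathsf{pun}_i)\in\Gamma_i}(x_{\triangle_i(\alpha\to\mathsf{pun}_i),s}\wedge tr_{s''}(\alpha))$. $tr^{\mathrm{prog}}$: $tr^{\mathrm{prog}}_{s,s'}(+_i\alpha)=\bigwedge_{j\ne i}\mathrm{eq}_j(s,s')\wedge\mathrm{eq}^{+\alpha}_i(s,s')\wedge\mathrm{eq}_{\mathrm{prop}}(s,s')$; $tr^{\mathrm{prog}}_{s,s'}(-_i\alpha)=\bigwedge_{j\ne i}\mathrm{eq}_j(s,s')\wedge\mathrm{eq}^{-\alpha}_i(s,s')\wedge\mathrm{eq}_{\mathrm{prop}}(s,s')$; $tr^{\mathrm{prog}}_{s,s'}(\pi_1;\pi_2)=\exists X_{s''}(tr^{\mathrm{prog}}_{s,s''}(\pi_1)\wedge tr^{\mathrm{prog}}_{s'',s'}(\pi_2))$;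 $tr^{\mathrm{prog}}_{s,s'}(\pi_1\cup\pi_2)=tr^{\mathrm{prog}}_{s,s'}(\pi_1)\vee tr^{\mathrm{prog}}_{s,s'}(\pi_2)$; $tr^{\mathrm{prog}}_{s,s'}(?\varphi)=\bigwedge_j\mathrm{eq}_j(s,s')\wedge\mathrm{eq}_{\mathrm{prop}}(s,s')\wedge tr_s(\varphi)$. In each quantified clause $s''$ is a fresh symbol. Finally $\mathrm{desc}_{S_0}(X_s):=\bigwedge_i(\bigwedge_{\alpha\in B_i}x_{\triangle_i\alpha,s}\wedge\bigwedge_{\alpha\in\Gamma_i\setminus B_i}\neg x_{\triangle_i\alpha,s})\wedge\bigwedge_{p\in V}x_{p,s}\wedge\bigwedge_{p\notin V}\neg x_{p,s}$ (over atoms $p$ with $x_{p,s}\in X_s$). *)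

theory Defs
  imports Main
begin

text \<open>Agents: a finite enumerable type 'agt (Agt = UNIV).  Atoms: countably
  infinitely many ordinary atoms plus the special atoms rew_i and pun_i.\<close>

datatype 'agt atm = Atom nat | Rew 'agt | Pun 'agt

datatype 'agt fm0 = Var "'agt atm" | Neg "'agt fm0" | Conj "'agt fm0" "'agt fm0"
  | Tri 'agt "'agt fm0"

definition imp0 :: "'agt fm0 \<Rightarrow> 'agt fm0 \<Rightarrow> 'agt fm0" where
  "imp0 a b = Neg (Conj a (Neg b))"

text \<open>A state: belief bases B_i (one per agent) and a valuation V.\<close>
type_synonym 'agt state = "('agt \<Rightarrow> 'agt fm0 set) \<times> 'agt atm set"

primrec sat0 :: "'agt state \<Rightarrow> 'agt fm0 \<Rightarrow> bool" where
  "sat0 S (Var p) = (p \<in> snd S)"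
| "sat0 S (Neg a) = (\<not> sat0 S a)"
| "sat0 S (Conj a b) = (sat0 S a \<and> sat0 S b)"
| "sat0 S (Tri i a) = (a \<in> fst S i)"

definition relE :: "'agt \<Rightarrow> 'agt state \<Rightarrow> 'agt state \<Rightarrow> bool" where
  "relE i S S' = (\<forall>a \<in> fst S i. sat0 S' a)"

definition relA :: "'agt \<Rightarrow> 'agt state \<Rightarrow> 'agt state \<Rightarrow> bool" where
  "relA i S S' = (\<exists>a. imp0 a (Var (Rew i)) \<in> fst S i \<and> sat0 S' a)"

definition relR :: "'agt \<Rightarrow> 'agt state \<Rightarrow> 'agt state \<Rightarrow> bool" where
  "relR i S S' = (\<exists>a. imp0 a (Var (Pun i)) \<in> fst S i \<and> sat0 S' a)"

definition states_Gamma :: "('agt \<Rightarrow> 'agt fm0 list) \<Rightarrow> 'agt state set" where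
  "states_Gamma \<Gamma> = {S. \<forall>i. fst S i \<subseteq> set (\<Gamma> i)}"

datatype 'agt dyn = DBase "'agt fm0" | DNeg "'agt dyn" | DAnd "'agt dyn" "'agt dyn"
  | DBox 'agt "'agt dyn" | DA 'agt "'agt dyn" | DR 'agt "'agt dyn"
  | DAreal 'agt "'agt dyn" | DRreal 'agt "'agt dyn" | DProg "'agt prog" "'agt dyn"
and 'agt prog = PAdd 'agt "'agt fm0" | PRem 'agt "'agt fm0" | PSeq "'agt prog" "'agt prog"
  | PChoice "'agt prog" "'agt prog" | PTest "'agt dyn"

primrec sat :: "'agt state set \<Rightarrow> 'agt state \<Rightarrow> 'agt dyn \<Rightarrow> bool"
  and step :: "'agt state set \<Rightarrow> 'agt prog \<Rightarrow> 'agt state \<Rightarrow> 'agt state \<Rightarrow> bool" where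
  "sat U S (DBase a) = sat0 S a"
| "sat U S (DNeg \<phi>) = (\<not> sat U S \<phi>)"
| "sat U S (DAnd \<phi> \<psi>) = (sat U S \<phi> \<and> sat U S \<psi>)"
| "sat U S (DBox i \<phi>) = (\<forall>S'\<in>U. relE i S S' \<longrightarrow> sat U S' \<phi>)"
| "sat U S (DA i \<phi>) = (\<forall>S'\<in>U. sat U S' \<phi> \<longrightarrow> relA i S S')"
| "sat U S (DR i \<phi>) = (\<forall>S'\<in>U. sat U S' \<phi> \<longrightarrow> relR i S S')"
| "sat U S (DAreal i \<phi>) = (\<forall>S'\<in>U. sat U S' \<phi> \<and> relE i S S' \<longrightarrow> relA i S S')"
| "sat U S (DRreal i \<phi>) = (\<forall>S'\<in>U. sat U S' \<phi> \<and> relE i S S' \<longrightarrow> relR i S S')"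
| "sat U S (DProg \<pi> \<phi>) = (\<forall>S'\<in>U. step U \<pi> S S' \<longrightarrow> sat U S' \<phi>)"
| "step U (PAdd i a) S S' = (snd S' = snd S \<and> fst S' = (fst S)(i := insert a (fst S i)))"
| "step U (PRem i a) S S' = (snd S' = snd S \<and> fst S' = (fst S)(i := fst S i - {a}))"
| "step U (PSeq p q) S S' = (\<exists>S''\<in>U. step U p S S'' \<and> step U q S'' S')"
| "step U (PChoice p q) S S' = (step U p S S' \<or> step U q S S')"
| "step U (PTest \<phi>) S S' = (S' = S \<and> sat U S \<phi>)"

datatype 'v qbf = QVar 'v | QTop | QBot | QNot "'v qbf" | QAnd "'v qbf" "'v qbf"
  | QOr "'v qbf" "'v qbf" | QImp "'v qbf" "'v qbf" | QIff "'v qbf" "'v qbf"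
  | QAll 'v "'v qbf" | QEx 'v "'v qbf"

primrec qeval :: "('v \<Rightarrow> bool) \<Rightarrow> 'v qbf \<Rightarrow> bool" where
  "qeval v (QVar x) = v x"
| "qeval v QTop = True"
| "qeval v QBot = False"
| "qeval v (QNot f) = (\<not> qeval v f)"
| "qeval v (QAnd f g) = (qeval v f \<and> qeval v g)"
| "qeval v (QOr f g) = (qeval v f \<or> qeval v g)"
| "qeval v (QImp f g) = (qeval v f \<longrightarrow> qeval v g)"
| "qeval v (QIff f g) = (qeval v f \<longleftrightarrow> qeval v g)"
| "qeval v (QAll x f) = (\<forall>b. qeval (v(x := b)) f)"
| "qeval v (QEx x f) = (\<exists>b. qeval (v(x := b)) f)"

definition qbf_true :: "'v qbf \<Rightarrow> bool" where
  "qbf_true f = (\<forall>v. qeval v f)"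

definition qands :: "'v qbf list \<Rightarrow> 'v qbf" where
  "qands fs = foldr QAnd fs QTop"

definition qors :: "'v qbf list \<Rightarrow> 'v qbf" where
  "qors fs = foldr QOr fs QBot"

definition qall_block :: "'v list \<Rightarrow> 'v qbf \<Rightarrow> 'v qbf" where
  "qall_block xs f = foldr QAll xs f"

definition qex_block :: "'v list \<Rightarrow> 'v qbf \<Rightarrow> 'v qbf" where
  "qex_block xs f = foldr QEx xs f"

text \<open>QBF variables x_{beta,s}: pairs (beta, s), abstract symbols s being naturals.\<close>
type_synonym 'agt qvar = "'agt fm0 \<times> nat"

primrec atoms0 :: "'agt fm0 \<Rightarrow> 'agt atm list" where
  "atoms0 (Var p) = [p]"
| "atoms0 (Neg a) = atoms0 a"
| "atoms0 (Conj a b) = atoms0 a @ atoms0 b"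
| "atoms0 (Tri i a) = atoms0 a"

primrec atoms_dyn :: "'agt dyn \<Rightarrow> 'agt atm list"
  and atoms_prog :: "'agt prog \<Rightarrow> 'agt atm list" where
  "atoms_dyn (DBase a) = atoms0 a"
| "atoms_dyn (DNeg \<phi>) = atoms_dyn \<phi>"
| "atoms_dyn (DAnd \<phi> \<psi>) = atoms_dyn \<phi> @ atoms_dyn \<psi>"
| "atoms_dyn (DBox i \<phi>) = atoms_dyn \<phi>"
| "atoms_dyn (DA i \<phi>) = atoms_dyn \<phi>"
| "atoms_dyn (DR i \<phi>) = atoms_dyn \<phi>"
| "atoms_dyn (DAreal i \<phi>) = atoms_dyn \<phi>"
| "atoms_dyn (DRreal i \<phi>) = atoms_dyn \<phi>"
| "atoms_dyn (DProg \<pi> \<phi>) = atoms_prog \<pi> @ atoms_dyn \<phi>"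
| "atoms_prog (PAdd i a) = atoms0 a"
| "atoms_prog (PRem i a) = atoms0 a"
| "atoms_prog (PSeq p q) = atoms_prog p @ atoms_prog q"
| "atoms_prog (PChoice p q) = atoms_prog p @ atoms_prog q"
| "atoms_prog (PTest \<phi>) = atoms_dyn \<phi>"

definition Patoms :: "('agt::enum \<Rightarrow> 'agt fm0 list) \<Rightarrow> 'agt dyn \<Rightarrow> 'agt atm list" where
  "Patoms \<Gamma> \<phi>0 = remdups (concat (map (\<lambda>i. concat (map atoms0 (\<Gamma> i))) enum_class.enum)
                           @ atoms_dyn \<phi>0)"

definition Xs :: "('agt::enum \<Rightarrow> 'agt fm0 list) \<Rightarrow> 'agt atm list \<Rightarrow> nat \<Rightarrow> 'agt qvar list" where
  "Xs \<Gamma> P s =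
     concat (map (\<lambda>i. map (\<lambda>a. (Tri i a, s)) (\<Gamma> i)
                     @ map (\<lambda>a. (Tri i (imp0 a (Var (Rew i))), s)) (\<Gamma> i)
                     @ map (\<lambda>a. (Tri i (imp0 a (Var (Pun i))), s)) (\<Gamma> i)) enum_class.enum)
     @ map (\<lambda>p. (Var p, s)) P"

definition tri :: "('agt \<Rightarrow> 'agt fm0 list) \<Rightarrow> nat \<Rightarrow> 'agt \<Rightarrow> 'agt fm0 \<Rightarrow> 'agt qvar qbf" where
  "tri \<Gamma> s i a = (if a \<in> set (\<Gamma> i) then QVar (Tri i a, s) else QBot)"

primrec tr0 :: "('agt \<Rightarrow> 'agt fm0 list) \<Rightarrow> nat \<Rightarrow> 'agt fm0 \<Rightarrow> 'agt qvar qbf" where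
  "tr0 \<Gamma> s (Var p) = QVar (Var p, s)"
| "tr0 \<Gamma> s (Neg a) = QNot (tr0 \<Gamma> s a)"
| "tr0 \<Gamma> s (Conj a b) = QAnd (tr0 \<Gamma> s a) (tr0 \<Gamma> s b)"
| "tr0 \<Gamma> s (Tri i a) = tri \<Gamma> s i a"

fun ant :: "'agt atm \<Rightarrow> 'agt fm0 \<Rightarrow> 'agt fm0 list" where
  "ant q (Neg (Conj a (Neg (Var r)))) = (if r = q then [a] else [])"
| "ant q _ = []"

lemma ant_imp0: "ant q b = [a] \<longleftrightarrow> b = imp0 a (Var q)"
  by (cases "(q,b)" rule: ant.cases) (auto simp: imp0_def)

definition Erel :: "('agt \<Rightarrow> 'agt fm0 list) \<Rightarrow> 'agt \<Rightarrow> nat \<Rightarrow> nat \<Rightarrow> 'agt qvar qbf" where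
  "Erel \<Gamma> i s s'' = qands (map (\<lambda>a. QImp (QVar (Tri i a, s)) (tr0 \<Gamma> s'' a)) (\<Gamma> i))"

definition Arel :: "('agt \<Rightarrow> 'agt fm0 list) \<Rightarrow> 'agt \<Rightarrow> nat \<Rightarrow> nat \<Rightarrow> 'agt qvar qbf" where
  "Arel \<Gamma> i s s'' = qors (map (\<lambda>a. QAnd (QVar (Tri i (imp0 a (Var (Rew i))), s)) (tr0 \<Gamma> s'' a))
                              (concat (map (ant (Rew i)) (\<Gamma> i))))"

definition Rrel :: "('agt \<Rightarrow> 'agt fm0 list) \<Rightarrow> 'agt \<Rightarrow> nat \<Rightarrow> nat \<Rightarrow> 'agt qvar qbf" where
  "Rrel \<Gamma> i s s'' = qors (map (\<lambda>a. QAnd (QVar (Tri i (imp0 a (Var (Pun i))), s)) (tr0 \<Gamma> s'' a))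
                              (concat (map (ant (Pun i)) (\<Gamma> i))))"

definition eq_prop :: "'agt atm list \<Rightarrow> nat \<Rightarrow> nat \<Rightarrow> 'agt qvar qbf" where
  "eq_prop P s s' = qands (map (\<lambda>p. QIff (QVar (Var p, s)) (QVar (Var p, s'))) P)"

definition eq_ag :: "('agt \<Rightarrow> 'agt fm0 list) \<Rightarrow> 'agt \<Rightarrow> nat \<Rightarrow> nat \<Rightarrow> 'agt qvar qbf" where
  "eq_ag \<Gamma> j s s' = qands (map (\<lambda>a. QIff (QVar (Tri j a, s)) (QVar (Tri j a, s'))) (\<Gamma> j))"

definition eq_others :: "('agt \<Rightarrow> 'agt fm0 list) \<Rightarrow> 'agt \<Rightarrow> 'agt fm0 \<Rightarrow> nat \<Rightarrow> nat \<Rightarrow> 'agt qvar qbf" where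
  "eq_others \<Gamma> i a s s' =
     qands (map (\<lambda>b. QIff (QVar (Tri i b, s)) (QVar (Tri i b, s'))) (filter (\<lambda>b. b \<noteq> a) (\<Gamma> i)))"

text \<open>eq^{+alpha}_i and eq^{-alpha}_i; the literal x_{tri_i alpha, s'} is written as
  tr_{s'}(tri_i alpha), which is that variable when alpha is in Gamma_i and bottom otherwise.\<close>
definition eq_plus :: "('agt \<Rightarrow> 'agt fm0 list) \<Rightarrow> 'agt \<Rightarrow> 'agt fm0 \<Rightarrow> nat \<Rightarrow> nat \<Rightarrow> 'agt qvar qbf" where
  "eq_plus \<Gamma> i a s s' = QAnd (tri \<Gamma> s' i a) (eq_others \<Gamma> i a s s')"

definition eq_minus :: "('agt \<Rightarrow> 'agt fm0 list) \<Rightarrow> 'agt \<Rightarrow> 'agt fm0 \<Rightarrow> nat \<Rightarrow> nat \<Rightarrow> 'agt qvar qbf" where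
  "eq_minus \<Gamma> i a s s' = QAnd (QNot (tri \<Gamma> s' i a)) (eq_others \<Gamma> i a s s')"

text \<open>tr and tr^prog.  The extra argument n is a supply of fresh symbols: every symbol
  in scope is < n, and n itself is used as the fresh symbol s''.\<close>
primrec tr :: "('agt::enum \<Rightarrow> 'agt fm0 list) \<Rightarrow> 'agt atm list \<Rightarrow> nat \<Rightarrow> nat \<Rightarrow> 'agt dyn \<Rightarrow> 'agt qvar qbf"
  and trp :: "('agt::enum \<Rightarrow> 'agt fm0 list) \<Rightarrow> 'agt atm list \<Rightarrow> nat \<Rightarrow> nat \<Rightarrow> nat \<Rightarrow> 'agt prog \<Rightarrow> 'agt qvar qbf" where
  "tr \<Gamma> P n s (DBase a) = tr0 \<Gamma> s a"
| "tr \<Gamma> P n s (DNeg \<phi>) = QNot (tr \<Gamma> P n s \<phi>)"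
| "tr \<Gamma> P n s (DAnd \<phi> \<psi>) = QAnd (tr \<Gamma> P n s \<phi>) (tr \<Gamma> P n s \<psi>)"
| "tr \<Gamma> P n s (DBox i \<phi>) = qall_block (Xs \<Gamma> P n) (QImp (Erel \<Gamma> i s n) (tr \<Gamma> P (Suc n) n \<phi>))"
| "tr \<Gamma> P n s (DA i \<phi>) = qall_block (Xs \<Gamma> P n) (QImp (tr \<Gamma> P (Suc n) n \<phi>) (Arel \<Gamma> i s n))"
| "tr \<Gamma> P n s (DR i \<phi>) = qall_block (Xs \<Gamma> P n) (QImp (tr \<Gamma> P (Suc n) n \<phi>) (Rrel \<Gamma> i s n))"
| "tr \<Gamma> P n s (DAreal i \<phi>) =
     qall_block (Xs \<Gamma> P n) (QImp (QAnd (tr \<Gamma> P (Suc n) n \<phi>) (Erel \<Gamma> i s n)) (Arel \<Gamma> i s n))"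
| "tr \<Gamma> P n s (DRreal i \<phi>) =
     qall_block (Xs \<Gamma> P n) (QImp (QAnd (tr \<Gamma> P (Suc n) n \<phi>) (Erel \<Gamma> i s n)) (Rrel \<Gamma> i s n))"
| "tr \<Gamma> P n s (DProg \<pi> \<phi>) =
     qall_block (Xs \<Gamma> P n) (QImp (trp \<Gamma> P (Suc n) s n \<pi>) (tr \<Gamma> P (Suc n) n \<phi>))"
| "trp \<Gamma> P n s s' (PAdd i a) =
     QAnd (qands (map (\<lambda>j. eq_ag \<Gamma> j s s') (filter (\<lambda>j. j \<noteq> i) enum_class.enum)))
          (QAnd (eq_plus \<Gamma> i a s s') (eq_prop P s s'))"
| "trp \<Gamma> P n s s' (PRem i a) =
     QAnd (qands (map (\<lambda>j. eq_ag \<Gamma> j s s') (filter (\<lambda>j. j \<noteq> i) enum_class.enum)))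
          (QAnd (eq_minus \<Gamma> i a s s') (eq_prop P s s'))"
| "trp \<Gamma> P n s s' (PSeq p q) =
     qex_block (Xs \<Gamma> P n) (QAnd (trp \<Gamma> P (Suc n) s n p) (trp \<Gamma> P (Suc n) n s' q))"
| "trp \<Gamma> P n s s' (PChoice p q) = QOr (trp \<Gamma> P n s s' p) (trp \<Gamma> P n s s' q)"
| "trp \<Gamma> P n s s' (PTest \<phi>) =
     QAnd (qands (map (\<lambda>j. eq_ag \<Gamma> j s s') enum_class.enum))
          (QAnd (eq_prop P s s') (tr \<Gamma> P n s \<phi>))"

definition desc :: "('agt::enum \<Rightarrow> 'agt fm0 list) \<Rightarrow> 'agt atm list \<Rightarrow> 'agt state \<Rightarrow> nat \<Rightarrow> 'agt qvar qbf" where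
  "desc \<Gamma> P S s = qands
     (concat (map (\<lambda>i. map (\<lambda>a. if a \<in> fst S i then QVar (Tri i a, s) else QNot (QVar (Tri i a, s)))
                            (\<Gamma> i)) enum_class.enum)
      @ map (\<lambda>p. if p \<in> snd S then QVar (Var p, s) else QNot (QVar (Var p, s))) P)"

definition main_qbf :: "('agt::enum \<Rightarrow> 'agt fm0 list) \<Rightarrow> 'agt dyn \<Rightarrow> 'agt state \<Rightarrow> 'agt qvar qbf" where
  "main_qbf \<Gamma> \<phi>0 S0 =
     (let P = Patoms \<Gamma> \<phi>0 in qex_block (Xs \<Gamma> P 0) (QAnd (desc \<Gamma> P S0 0) (tr \<Gamma> P 1 0 \<phi>0)))"

end

theory Submission
  imports Defs
begin

lemma qeval_qands[simp]: "qeval v (qands fs) = (\<forall>f\<in>set fs. qeval v f)"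
  unfolding qands_def by (induction fs) auto

lemma qeval_qors[simp]: "qeval v (qors fs) = (\<exists>f\<in>set fs. qeval v f)"
  unfolding qors_def by (induction fs) auto

lemma qeval_qall_block: "qeval v (qall_block xs f) = (\<forall>w. (\<forall>x. x \<notin> set xs \<longrightarrow> w x = v x) \<longrightarrow> qeval w f)"
proof (induction xs arbitrary: v)
  case Nil
  then show ?case unfolding qall_block_def
    by auto
next
  case (Cons x xs)
  have "qeval v (qall_block (x # xs) f) = (\<forall>b. qeval (v(x:=b)) (qall_block xs f))"
    by (simp add: qall_block_def)
  also have "\<dots> = (\<forall>w. (\<forall>y. y \<notin> set (x#xs) \<longrightarrow> w y = v y) \<longrightarrow> qeval w f)"
    unfolding Cons
  proof (intro iffI allI impI)
    fix w assume H: "\<forall>b w. (\<forall>y. y \<notin> set xs \<longrightarrow> w y = (v(x := b)) y) \<longrightarrow> qeval w f"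
      and W: "\<forall>y. y \<notin> set (x # xs) \<longrightarrow> w y = v y"
    from H have "(\<forall>y. y \<notin> set xs \<longrightarrow> w y = (v(x := w x)) y) \<longrightarrow> qeval w f" by blast
    then show "qeval w f" using W by auto
  next
    fix b w assume H: "\<forall>w. (\<forall>y. y \<notin> set (x # xs) \<longrightarrow> w y = v y) \<longrightarrow> qeval w f"
      and W: "\<forall>y. y \<notin> set xs \<longrightarrow> w y = (v(x := b)) y"
    show "qeval w f" using H[rule_format, of w] W by (auto split: if_splits)
  qed
  finally show ?case .
qed

lemma qeval_qex_block: "qeval v (qex_block xs f) = (\<exists>w. (\<forall>x. x \<notin> set xs \<longrightarrow> w x = v x) \<and> qeval w f)"
proof (induction xs arbitrary: v)
  case Nil
  then show ?case unfolding qex_block_def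
    by auto
next
  case (Cons x xs)
  have "qeval v (qex_block (x # xs) f) = (\<exists>b. qeval (v(x:=b)) (qex_block xs f))"
    by (simp add: qex_block_def)
  also have "\<dots> = (\<exists>w. (\<forall>y. y \<notin> set (x#xs) \<longrightarrow> w y = v y) \<and> qeval w f)"
    unfolding Cons
  proof (intro iffI)
    assume "\<exists>b w. (\<forall>y. y \<notin> set xs \<longrightarrow> w y = (v(x := b)) y) \<and> qeval w f"
    then obtain b w where "\<forall>y. y \<notin> set xs \<longrightarrow> w y = (v(x := b)) y" "qeval w f" by blast
    then show "\<exists>w. (\<forall>y. y \<notin> set (x#xs) \<longrightarrow> w y = v y) \<and> qeval w f"
      by (intro exI[of _ w]) (auto split: if_splits)
  next
    assume "\<exists>w. (\<forall>y. y \<notin> set (x#xs) \<longrightarrow> w y = v y) \<and> qeval w f"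
    then obtain w where "\<forall>y. y \<notin> set (x#xs) \<longrightarrow> w y = v y" "qeval w f" by blast
    then show "\<exists>b w. (\<forall>y. y \<notin> set xs \<longrightarrow> w y = (v(x := b)) y) \<and> qeval w f"
      by (intro exI[of _ "w x"] exI[of _ w]) auto
  qed
  finally show ?case .
qed

lemma Xs_snd: "y \<in> set (Xs \<Gamma> P n) \<Longrightarrow> snd y = n"
  unfolding Xs_def by auto

lemma Xs_tri: "a \<in> set (\<Gamma> i) \<Longrightarrow> (Tri i a, n) \<in> set (Xs \<Gamma> P n)"
  unfolding Xs_def using UNIV_enum by auto

lemma Xs_var: "p \<in> set P \<Longrightarrow> (Var p, n) \<in> set (Xs \<Gamma> P n)"
  unfolding Xs_def by auto

definition enc :: "('agt::enum \<Rightarrow> 'agt fm0 list) \<Rightarrow> 'agt atm list \<Rightarrow> ('agt qvar \<Rightarrow> bool) \<Rightarrow> nat \<Rightarrow> 'agt state \<Rightarrow> bool" where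
  "enc \<Gamma> P v s S \<longleftrightarrow> (\<forall>i. \<forall>a\<in>set (\<Gamma> i). v (Tri i a, s) = (a \<in> fst S i)) \<and> (\<forall>p\<in>set P. v (Var p, s) = (p \<in> snd S))"

lemma enc_cong: "(\<forall>x. snd x = s \<longrightarrow> w x = v x) \<Longrightarrow> enc \<Gamma> P w s S = enc \<Gamma> P v s S"
  unfolding enc_def by auto

lemma enc_exists:
  "\<exists>w. (\<forall>x. x \<notin> set (Xs \<Gamma> P n) \<longrightarrow> w x = v x) \<and> enc \<Gamma> P w n M"
proof -
  define w where "w = (\<lambda>x. if x \<in> set (Xs \<Gamma> P n) then
      (case fst x of Var p \<Rightarrow> p \<in> snd M | Tri i a \<Rightarrow> a \<in> fst M i | _ \<Rightarrow> False) else v x)"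
  have "enc \<Gamma> P w n M" unfolding enc_def w_def using Xs_tri Xs_var by fastforce
  then show ?thesis by (intro exI[of _ w]) (auto simp: w_def)
qed

lemma enc_state_of:
  "enc \<Gamma> P w n (\<lambda>i. {a\<in>set (\<Gamma> i). w (Tri i a, n)}, {p\<in>set P. w (Var p, n)})"
  "(\<lambda>i. {a\<in>set (\<Gamma> i). w (Tri i a, n)}, {p\<in>set P. w (Var p, n)}) \<in> states_Gamma \<Gamma>"
  unfolding enc_def states_Gamma_def by auto

definition atomsG :: "('agt::enum \<Rightarrow> 'agt fm0 list) \<Rightarrow> 'agt atm list \<Rightarrow> bool" where
  "atomsG \<Gamma> P \<longleftrightarrow> (\<forall>i. \<forall>a\<in>set (\<Gamma> i). set (atoms0 a) \<subseteq> set P)"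

lemma tr0_correct:
  assumes "S \<in> states_Gamma \<Gamma>" "enc \<Gamma> P v s S" "set (atoms0 a) \<subseteq> set P"
  shows "qeval v (tr0 \<Gamma> s a) = sat0 S a"
  using assms(3)
proof (induction a)
  case (Tri i a)
  then show ?case using assms(1,2) unfolding enc_def states_Gamma_def by (auto simp: tri_def)
qed (use assms in \<open>auto simp: enc_def\<close>)

lemma Erel_correct:
  assumes "S \<in> states_Gamma \<Gamma>" "M \<in> states_Gamma \<Gamma>" "enc \<Gamma> P v s S" "enc \<Gamma> P v t M" "atomsG \<Gamma> P"
  shows "qeval v (Erel \<Gamma> i s t) = relE i S M"
  using assms tr0_correct[OF assms(2,4)] unfolding Erel_def relE_def atomsG_def enc_def states_Gamma_def
  by (simp; blast)

lemma in_ant: "a \<in> set (ant q b) \<longleftrightarrow> b = imp0 a (Var q)"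
  by (cases "(q,b)" rule: ant.cases) (auto simp: imp0_def)

lemma Arel_correct:
  assumes "S \<in> states_Gamma \<Gamma>" "M \<in> states_Gamma \<Gamma>" "enc \<Gamma> P v s S" "enc \<Gamma> P v t M" "atomsG \<Gamma> P"
  shows "qeval v (Arel \<Gamma> i s t) = relA i S M"
proof -
  have at: "set (atoms0 a) \<subseteq> set P" if "imp0 a (Var (Rew i)) \<in> set (\<Gamma> i)" for a
    using assms(5) that unfolding atomsG_def imp0_def by fastforce
  have inS: "fst S i \<subseteq> set (\<Gamma> i)" using assms(1) unfolding states_Gamma_def by auto
  show ?thesis
    unfolding Arel_def relA_def
  proof (simp, intro iffI)
    assume "\<exists>x\<in>set (\<Gamma> i). \<exists>a\<in>set (ant (Rew i) x). v (Tri i (imp0 a (Var (Rew i))), s) \<and> qeval v (tr0 \<Gamma> t a)"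
    then obtain a where "imp0 a (Var (Rew i)) \<in> set (\<Gamma> i)" "v (Tri i (imp0 a (Var (Rew i))), s)" "qeval v (tr0 \<Gamma> t a)"
      by (auto simp: in_ant)
    then show "\<exists>a. imp0 a (Var (Rew i)) \<in> fst S i \<and> sat0 M a"
      using assms(3) tr0_correct[OF assms(2,4) at] unfolding enc_def by blast
  next
    assume "\<exists>a. imp0 a (Var (Rew i)) \<in> fst S i \<and> sat0 M a"
    then obtain a where a: "imp0 a (Var (Rew i)) \<in> fst S i" "sat0 M a" by blast
    then have "imp0 a (Var (Rew i)) \<in> set (\<Gamma> i)" using inS by auto
    then show "\<exists>x\<in>set (\<Gamma> i). \<exists>b\<in>set (ant (Rew i) x). v (Tri i (imp0 b (Var (Rew i))), s) \<and> qeval v (tr0 \<Gamma> t b)"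
      using a assms(3) tr0_correct[OF assms(2,4) at] unfolding enc_def
      by (intro bexI[of _ "imp0 a (Var (Rew i))"] bexI[of _ a]) (auto simp: in_ant)
  qed
qed

lemma Rrel_correct:
  assumes "S \<in> states_Gamma \<Gamma>" "M \<in> states_Gamma \<Gamma>" "enc \<Gamma> P v s S" "enc \<Gamma> P v t M" "atomsG \<Gamma> P"
  shows "qeval v (Rrel \<Gamma> i s t) = relR i S M"
proof -
  have at: "set (atoms0 a) \<subseteq> set P" if "imp0 a (Var (Pun i)) \<in> set (\<Gamma> i)" for a
    using assms(5) that unfolding atomsG_def imp0_def by fastforce
  have inS: "fst S i \<subseteq> set (\<Gamma> i)" using assms(1) unfolding states_Gamma_def by auto
  show ?thesis
    unfolding Rrel_def relR_def
  proof (simp, intro iffI)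
    assume "\<exists>x\<in>set (\<Gamma> i). \<exists>a\<in>set (ant (Pun i) x). v (Tri i (imp0 a (Var (Pun i))), s) \<and> qeval v (tr0 \<Gamma> t a)"
    then obtain a where "imp0 a (Var (Pun i)) \<in> set (\<Gamma> i)" "v (Tri i (imp0 a (Var (Pun i))), s)" "qeval v (tr0 \<Gamma> t a)"
      by (auto simp: in_ant)
    then show "\<exists>a. imp0 a (Var (Pun i)) \<in> fst S i \<and> sat0 M a"
      using assms(3) tr0_correct[OF assms(2,4) at] unfolding enc_def by blast
  next
    assume "\<exists>a. imp0 a (Var (Pun i)) \<in> fst S i \<and> sat0 M a"
    then obtain a where a: "imp0 a (Var (Pun i)) \<in> fst S i" "sat0 M a" by blast
    then have "imp0 a (Var (Pun i)) \<in> set (\<Gamma> i)" using inS by auto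
    then show "\<exists>x\<in>set (\<Gamma> i). \<exists>b\<in>set (ant (Pun i) x). v (Tri i (imp0 b (Var (Pun i))), s) \<and> qeval v (tr0 \<Gamma> t b)"
      using a assms(3) tr0_correct[OF assms(2,4) at] unfolding enc_def
      by (intro bexI[of _ "imp0 a (Var (Pun i))"] bexI[of _ a]) (auto simp: in_ant)
  qed
qed

definition simS :: "'agt atm list \<Rightarrow> 'agt state \<Rightarrow> 'agt state \<Rightarrow> bool" where
  "simS P S T \<longleftrightarrow> fst S = fst T \<and> snd S \<inter> set P = snd T \<inter> set P"

lemma simS_refl: "simS P S S" by (simp add: simS_def)
lemma simS_sym: "simS P S T \<Longrightarrow> simS P T S" by (simp add: simS_def)
lemma simS_trans: "simS P S T \<Longrightarrow> simS P T R \<Longrightarrow> simS P S R" by (simp add: simS_def)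

lemma sim_U: "simS P S T \<Longrightarrow> (S \<in> states_Gamma \<Gamma>) = (T \<in> states_Gamma \<Gamma>)"
  by (simp add: simS_def states_Gamma_def)

lemma sim_sat0: "simS P S T \<Longrightarrow> set (atoms0 a) \<subseteq> set P \<Longrightarrow> sat0 S a = sat0 T a"
  by (induction a) (auto simp: simS_def)

lemma sim_rel: "simS P S T \<Longrightarrow> relE i S M = relE i T M"
  "simS P S T \<Longrightarrow> relA i S M = relA i T M"
  "simS P S T \<Longrightarrow> relR i S M = relR i T M"
  by (auto simp: simS_def relE_def relA_def relR_def)

lemma sim_main:
  shows "set (atoms_dyn \<phi>) \<subseteq> set P \<Longrightarrow> simS P S T \<Longrightarrow> sat (states_Gamma \<Gamma>) S \<phi> = sat (states_Gamma \<Gamma>) T \<phi>"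
  and "set (atoms_prog \<pi>) \<subseteq> set P \<Longrightarrow> simS P S T \<Longrightarrow> step (states_Gamma \<Gamma>) \<pi> S S' \<Longrightarrow>
         \<exists>T'. step (states_Gamma \<Gamma>) \<pi> T T' \<and> simS P S' T'"
proof (induction \<phi> and \<pi> arbitrary: S T and S T S')
  case (DBase x)
  then show ?case using sim_sat0 by simp
next
  case (DBox i \<phi>)
  then show ?case by (simp add: sim_rel[OF DBox.prems(2)])
next
  case (DA i \<phi>)
  then show ?case by (simp add: sim_rel[OF DA.prems(2)])
next
  case (DR i \<phi>)
  then show ?case by (simp add: sim_rel[OF DR.prems(2)])
next
  case (DAreal i \<phi>)
  then show ?case by (simp add: sim_rel[OF DAreal.prems(2)])
next
  case (DRreal i \<phi>)
  then show ?case by (simp add: sim_rel[OF DRreal.prems(2)])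
next
  case (DProg \<pi> \<phi>)
  have a1: "set (atoms_prog \<pi>) \<subseteq> set P" and a2: "set (atoms_dyn \<phi>) \<subseteq> set P" using DProg.prems by auto
  have dir: "sat (states_Gamma \<Gamma>) Y (DProg \<pi> \<phi>)" if "simS P X Y" "sat (states_Gamma \<Gamma>) X (DProg \<pi> \<phi>)" for X Y
  proof -
    have "sat (states_Gamma \<Gamma>) Y' \<phi>" if YY: "Y' \<in> states_Gamma \<Gamma>" "step (states_Gamma \<Gamma>) \<pi> Y Y'" for Y'
    proof -
      obtain X' where X': "step (states_Gamma \<Gamma>) \<pi> X X'" "simS P Y' X'"
        using DProg.IH(1)[OF a1 simS_sym[OF \<open>simS P X Y\<close>] YY(2)] by blast
      have "X' \<in> states_Gamma \<Gamma>" using sim_U[OF X'(2)] YY(1) by simp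
      then have "sat (states_Gamma \<Gamma>) X' \<phi>" using \<open>sat (states_Gamma \<Gamma>) X (DProg \<pi> \<phi>)\<close> X'(1) by simp
      then show ?thesis using DProg.IH(2)[OF a2 X'(2)] by simp
    qed
    then show ?thesis by simp
  qed
  show ?case using dir[OF DProg.prems(2)] dir[OF simS_sym[OF DProg.prems(2)]] by blast
next
  case (PAdd i a)
  have st: "snd S' = snd S" "fst S' = (fst S)(i := insert a (fst S i))" using PAdd.prems(3) by simp_all
  have eq: "fst S = fst T" "snd S \<inter> set P = snd T \<inter> set P" using PAdd.prems(2) by (simp_all add: simS_def)
  have "step (states_Gamma \<Gamma>) (PAdd i a) T ((fst T)(i := insert a (fst T i)), snd T)" by simp
  moreover have "simS P S' ((fst T)(i := insert a (fst T i)), snd T)" unfolding simS_def using st eq by simp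
  ultimately show ?case by blast
next
  case (PRem i a)
  have st: "snd S' = snd S" "fst S' = (fst S)(i := fst S i - {a})" using PRem.prems(3) by simp_all
  have eq: "fst S = fst T" "snd S \<inter> set P = snd T \<inter> set P" using PRem.prems(2) by (simp_all add: simS_def)
  have "step (states_Gamma \<Gamma>) (PRem i a) T ((fst T)(i := fst T i - {a}), snd T)" by simp
  moreover have "simS P S' ((fst T)(i := fst T i - {a}), snd T)" unfolding simS_def using st eq by simp
  ultimately show ?case by blast
next
  case (PSeq p q)
  from PSeq.prems(3) obtain M where M: "M \<in> states_Gamma \<Gamma>" "step (states_Gamma \<Gamma>) p S M"
    "step (states_Gamma \<Gamma>) q M S'" by auto
  obtain M' where M': "step (states_Gamma \<Gamma>) p T M'" "simS P M M'"
    using PSeq.IH(1)[OF _ PSeq.prems(2) M(2)] PSeq.prems(1) by auto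
  obtain T' where T': "step (states_Gamma \<Gamma>) q M' T'" "simS P S' T'"
    using PSeq.IH(2)[OF _ M'(2) M(3)] PSeq.prems(1) by auto
  have "M' \<in> states_Gamma \<Gamma>" using sim_U[OF M'(2)] M(1) by simp
  then show ?case using M' T' by (intro exI[of _ T']) auto
next
  case (PChoice p q)
  have a1: "set (atoms_prog p) \<subseteq> set P" and a2: "set (atoms_prog q) \<subseteq> set P" using PChoice.prems by auto
  from PChoice.prems(3) have "step (states_Gamma \<Gamma>) p S S' \<or> step (states_Gamma \<Gamma>) q S S'" by simp
  then show ?case
  proof
    assume "step (states_Gamma \<Gamma>) p S S'"
    then obtain T' where "step (states_Gamma \<Gamma>) p T T'" "simS P S' T'" using PChoice.IH(1)[OF a1 PChoice.prems(2)] by blast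
    then show ?case by (intro exI[of _ T']) simp
  next
    assume "step (states_Gamma \<Gamma>) q S S'"
    then obtain T' where "step (states_Gamma \<Gamma>) q T T'" "simS P S' T'" using PChoice.IH(2)[OF a2 PChoice.prems(2)] by blast
    then show ?case by (intro exI[of _ T']) simp
  qed
next
  case (PTest \<phi>)
  have "S' = S" "sat (states_Gamma \<Gamma>) S \<phi>" using PTest.prems(3) by simp_all
  moreover have "sat (states_Gamma \<Gamma>) S \<phi> = sat (states_Gamma \<Gamma>) T \<phi>"
    using PTest.IH PTest.prems(1,2) by simp
  ultimately have "step (states_Gamma \<Gamma>) (PTest \<phi>) T T \<and> simS P S' T" using PTest.prems(2) by simp
  then show ?case by blast
next
  case (DNeg \<phi>)
  then show ?case by simp
next
  case (DAnd \<phi> \<psi>)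
  then show ?case by simp
qed


lemma block_all:
  assumes "\<And>w M. (\<forall>x. snd x \<noteq> n \<longrightarrow> w x = v x) \<Longrightarrow> M \<in> states_Gamma \<Gamma> \<Longrightarrow> enc \<Gamma> P w n M \<Longrightarrow> qeval w F = G M"
  shows "qeval v (qall_block (Xs \<Gamma> P n) F) = (\<forall>M\<in>states_Gamma \<Gamma>. G M)"
  unfolding qeval_qall_block
proof (intro iffI ballI allI impI)
  fix M assume H: "\<forall>w. (\<forall>x. x \<notin> set (Xs \<Gamma> P n) \<longrightarrow> w x = v x) \<longrightarrow> qeval w F" and M: "M \<in> states_Gamma \<Gamma>"
  obtain w where w: "\<forall>x. x \<notin> set (Xs \<Gamma> P n) \<longrightarrow> w x = v x" "enc \<Gamma> P w n M" using enc_exists[of \<Gamma> P n v M] by blast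
  have ag: "\<forall>x. snd x \<noteq> n \<longrightarrow> w x = v x" using w(1) Xs_snd[of _ \<Gamma> P n] by metis
  have "qeval w F" using H w(1) by blast
  then show "G M" using assms[OF ag M w(2)] by simp
next
  fix w assume H: "\<forall>M\<in>states_Gamma \<Gamma>. G M" and w: "\<forall>x. x \<notin> set (Xs \<Gamma> P n) \<longrightarrow> w x = v x"
  have ag: "\<forall>x. snd x \<noteq> n \<longrightarrow> w x = v x" using w Xs_snd[of _ \<Gamma> P n] by metis
  have e: "qeval w F = G (\<lambda>i. {a\<in>set (\<Gamma> i). w (Tri i a, n)}, {p\<in>set P. w (Var p, n)})"
    by (rule assms[OF ag enc_state_of(2) enc_state_of(1)])
  have "G (\<lambda>i. {a\<in>set (\<Gamma> i). w (Tri i a, n)}, {p\<in>set P. w (Var p, n)})"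
    using H enc_state_of(2) by (rule bspec)
  then show "qeval w F" using e by simp
qed

lemma block_ex:
  assumes "\<And>w M. (\<forall>x. snd x \<noteq> n \<longrightarrow> w x = v x) \<Longrightarrow> M \<in> states_Gamma \<Gamma> \<Longrightarrow> enc \<Gamma> P w n M \<Longrightarrow> qeval w F = G M"
  shows "qeval v (qex_block (Xs \<Gamma> P n) F) = (\<exists>M\<in>states_Gamma \<Gamma>. G M)"
  unfolding qeval_qex_block
proof (intro iffI)
  assume "\<exists>w. (\<forall>x. x \<notin> set (Xs \<Gamma> P n) \<longrightarrow> w x = v x) \<and> qeval w F"
  then obtain w where w: "\<forall>x. x \<notin> set (Xs \<Gamma> P n) \<longrightarrow> w x = v x" "qeval w F" by blast
  have ag: "\<forall>x. snd x \<noteq> n \<longrightarrow> w x = v x" using w(1) Xs_snd[of _ \<Gamma> P n] by metis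
  have e: "qeval w F = G (\<lambda>i. {a\<in>set (\<Gamma> i). w (Tri i a, n)}, {p\<in>set P. w (Var p, n)})"
    by (rule assms[OF ag enc_state_of(2) enc_state_of(1)])
  then have "G (\<lambda>i. {a\<in>set (\<Gamma> i). w (Tri i a, n)}, {p\<in>set P. w (Var p, n)})" using w(2) by simp
  then show "\<exists>M\<in>states_Gamma \<Gamma>. G M" using enc_state_of(2)[where \<Gamma>=\<Gamma> and P=P and w=w and n=n] by blast
next
  assume "\<exists>M\<in>states_Gamma \<Gamma>. G M"
  then obtain M where M: "M \<in> states_Gamma \<Gamma>" "G M" by blast
  obtain w where w: "\<forall>x. x \<notin> set (Xs \<Gamma> P n) \<longrightarrow> w x = v x" "enc \<Gamma> P w n M" using enc_exists[of \<Gamma> P n v M] by blast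
  have ag: "\<forall>x. snd x \<noteq> n \<longrightarrow> w x = v x" using w(1) Xs_snd[of _ \<Gamma> P n] by metis
  have "qeval w F" using assms[OF ag M(1) w(2)] M(2) by simp
  then show "\<exists>w. (\<forall>x. x \<notin> set (Xs \<Gamma> P n) \<longrightarrow> w x = v x) \<and> qeval w F" using w(1) by blast
qed

lemma enc_other: "(\<forall>x. snd x \<noteq> n \<longrightarrow> w x = v x) \<Longrightarrow> s < n \<Longrightarrow> enc \<Gamma> P v s S \<Longrightarrow> enc \<Gamma> P w s S"
  using enc_cong[of s w v] by auto

lemma set_eq_sub: "A \<subseteq> G \<Longrightarrow> A' \<subseteq> G \<Longrightarrow> (A' = A) = (\<forall>b\<in>G. b \<in> A \<longleftrightarrow> b \<in> A')"
  by blast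

lemma set_ins_sub: "A \<subseteq> G \<Longrightarrow> A' \<subseteq> G \<Longrightarrow> (A' = insert a A) = (a \<in> G \<and> a \<in> A' \<and> (\<forall>b\<in>G. b \<noteq> a \<longrightarrow> (b \<in> A \<longleftrightarrow> b \<in> A')))"
  by (auto simp: subset_iff)

lemma set_rem_sub: "A \<subseteq> G \<Longrightarrow> A' \<subseteq> G \<Longrightarrow> (A' = A - {a}) = (a \<notin> A' \<and> (\<forall>b\<in>G. b \<noteq> a \<longrightarrow> (b \<in> A \<longleftrightarrow> b \<in> A')))"
  by (auto simp: subset_iff)

lemma eq_ag_correct:
  assumes "S \<in> states_Gamma \<Gamma>" "S' \<in> states_Gamma \<Gamma>" "enc \<Gamma> P v s S" "enc \<Gamma> P v s' S'"
  shows "qeval v (eq_ag \<Gamma> j s s') = (fst S' j = fst S j)"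
proof -
  have "fst S j \<subseteq> set (\<Gamma> j)" "fst S' j \<subseteq> set (\<Gamma> j)" using assms(1,2) by (auto simp: states_Gamma_def)
  then show ?thesis using assms(3,4) unfolding eq_ag_def enc_def by (simp add: set_eq_sub)
qed

lemma eq_prop_correct:
  assumes "enc \<Gamma> P v s S" "enc \<Gamma> P v s' S'"
  shows "qeval v (eq_prop P s s') = (snd S \<inter> set P = snd S' \<inter> set P)"
  using assms unfolding eq_prop_def enc_def by auto

lemma eq_others_correct:
  assumes "enc \<Gamma> P v s S" "enc \<Gamma> P v s' S'"
  shows "qeval v (eq_others \<Gamma> i a s s') = (\<forall>b\<in>set (\<Gamma> i). b \<noteq> a \<longrightarrow> (b \<in> fst S i \<longleftrightarrow> b \<in> fst S' i))"
  using assms unfolding eq_others_def enc_def by auto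

lemma tri_correct:
  assumes "S' \<in> states_Gamma \<Gamma>" "enc \<Gamma> P v s' S'"
  shows "qeval v (tri \<Gamma> s' i a) = (a \<in> set (\<Gamma> i) \<and> a \<in> fst S' i)"
  using assms unfolding tri_def enc_def states_Gamma_def by auto

lemma all_others: "(\<forall>j\<in>set (filter (\<lambda>j. j \<noteq> i) enum_class.enum). Q j) = (\<forall>j. j \<noteq> i \<longrightarrow> Q j)"
  using UNIV_enum by auto

lemma in_enum: "x \<in> set enum_class.enum"
  using UNIV_enum by auto

lemma all_enum: "(\<forall>j\<in>set enum_class.enum. Q j) = (\<forall>j. Q j)"
  using UNIV_enum by auto

lemma upd_char: "(G = F(i := X)) = ((\<forall>j. j \<noteq> i \<longrightarrow> G j = F j) \<and> G i = X)"
  by (auto simp: fun_eq_iff)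

lemma step_sim_char: "(\<exists>T. (snd T = snd S \<and> fst T = F) \<and> simS P T S') = (fst S' = F \<and> snd S \<inter> set P = snd S' \<inter> set P)"
proof
  assume "\<exists>T. (snd T = snd S \<and> fst T = F) \<and> simS P T S'"
  then obtain T where "snd T = snd S" "fst T = F" "simS P T S'" by blast
  then show "fst S' = F \<and> snd S \<inter> set P = snd S' \<inter> set P" by (simp add: simS_def)
next
  assume "fst S' = F \<and> snd S \<inter> set P = snd S' \<inter> set P"
  then have "(snd (F, snd S) = snd S \<and> fst (F, snd S) = F) \<and> simS P (F, snd S) S'" by (simp add: simS_def)
  then show "\<exists>T. (snd T = snd S \<and> fst T = F) \<and> simS P T S'" by blast
qed

lemma test_sim_char: "(\<exists>T. (T = S \<and> Q) \<and> simS P T S') = ((\<forall>j. fst S' j = fst S j) \<and> snd S \<inter> set P = snd S' \<inter> set P \<and> Q)"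
  by (auto simp: simS_def fun_eq_iff)

lemma tr_correct:
  assumes aG: "atomsG \<Gamma> P"
  shows "set (atoms_dyn \<phi>) \<subseteq> set P \<Longrightarrow> s < n \<Longrightarrow> S \<in> states_Gamma \<Gamma> \<Longrightarrow> enc \<Gamma> P v s S \<Longrightarrow>
           qeval v (tr \<Gamma> P n s \<phi>) = sat (states_Gamma \<Gamma>) S \<phi>"
  and "set (atoms_prog \<pi>) \<subseteq> set P \<Longrightarrow> s < n \<Longrightarrow> s' < n \<Longrightarrow> S \<in> states_Gamma \<Gamma> \<Longrightarrow> S' \<in> states_Gamma \<Gamma> \<Longrightarrow>
           enc \<Gamma> P v s S \<Longrightarrow> enc \<Gamma> P v s' S' \<Longrightarrow>
           qeval v (trp \<Gamma> P n s s' \<pi>) = (\<exists>T. step (states_Gamma \<Gamma>) \<pi> S T \<and> simS P T S')"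
proof (induction \<phi> and \<pi> arbitrary: n s S v and n s s' S S' v)
  case (DBase x)
  then show ?case using tr0_correct by simp
next
  case (DBox i \<phi>)
  show ?case unfolding tr.simps sat.simps
  proof (rule block_all)
    fix w M assume w: "\<forall>x. snd x \<noteq> n \<longrightarrow> w x = v x" and M: "M \<in> states_Gamma \<Gamma>" "enc \<Gamma> P w n M"
    have e: "enc \<Gamma> P w s S" using enc_other[OF w] DBox.prems by blast
    have ih: "qeval w (tr \<Gamma> P (Suc n) n \<phi>) = sat (states_Gamma \<Gamma>) M \<phi>"
      by (rule DBox.IH) (use DBox.prems M in auto)
    show "qeval w (QImp (Erel \<Gamma> i s n) (tr \<Gamma> P (Suc n) n \<phi>)) = (relE i S M \<longrightarrow> sat (states_Gamma \<Gamma>) M \<phi>)"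
      using Erel_correct[OF DBox.prems(3) M(1) e M(2) aG] ih DBox.prems M by simp
  qed
next
  case (DA i \<phi>)
  show ?case unfolding tr.simps sat.simps
  proof (rule block_all)
    fix w M assume w: "\<forall>x. snd x \<noteq> n \<longrightarrow> w x = v x" and M: "M \<in> states_Gamma \<Gamma>" "enc \<Gamma> P w n M"
    have e: "enc \<Gamma> P w s S" using enc_other[OF w] DA.prems by blast
    have ih: "qeval w (tr \<Gamma> P (Suc n) n \<phi>) = sat (states_Gamma \<Gamma>) M \<phi>"
      by (rule DA.IH) (use DA.prems M in auto)
    show "qeval w (QImp (tr \<Gamma> P (Suc n) n \<phi>) (Arel \<Gamma> i s n)) = (sat (states_Gamma \<Gamma>) M \<phi> \<longrightarrow> relA i S M)"
      using Arel_correct[OF DA.prems(3) M(1) e M(2) aG] ih DA.prems M by simp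
  qed
next
  case (DR i \<phi>)
  show ?case unfolding tr.simps sat.simps
  proof (rule block_all)
    fix w M assume w: "\<forall>x. snd x \<noteq> n \<longrightarrow> w x = v x" and M: "M \<in> states_Gamma \<Gamma>" "enc \<Gamma> P w n M"
    have e: "enc \<Gamma> P w s S" using enc_other[OF w] DR.prems by blast
    have ih: "qeval w (tr \<Gamma> P (Suc n) n \<phi>) = sat (states_Gamma \<Gamma>) M \<phi>"
      by (rule DR.IH) (use DR.prems M in auto)
    show "qeval w (QImp (tr \<Gamma> P (Suc n) n \<phi>) (Rrel \<Gamma> i s n)) = (sat (states_Gamma \<Gamma>) M \<phi> \<longrightarrow> relR i S M)"
      using Rrel_correct[OF DR.prems(3) M(1) e M(2) aG] ih DR.prems M by simp
  qed
next
  case (DAreal i \<phi>)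
  show ?case unfolding tr.simps sat.simps
  proof (rule block_all)
    fix w M assume w: "\<forall>x. snd x \<noteq> n \<longrightarrow> w x = v x" and M: "M \<in> states_Gamma \<Gamma>" "enc \<Gamma> P w n M"
    have e: "enc \<Gamma> P w s S" using enc_other[OF w] DAreal.prems by blast
    have ih: "qeval w (tr \<Gamma> P (Suc n) n \<phi>) = sat (states_Gamma \<Gamma>) M \<phi>"
      by (rule DAreal.IH) (use DAreal.prems M in auto)
    show "qeval w (QImp (QAnd (tr \<Gamma> P (Suc n) n \<phi>) (Erel \<Gamma> i s n)) (Arel \<Gamma> i s n)) =
          (sat (states_Gamma \<Gamma>) M \<phi> \<and> relE i S M \<longrightarrow> relA i S M)"
      using Arel_correct[OF DAreal.prems(3) M(1) e M(2) aG] Erel_correct[OF DAreal.prems(3) M(1) e M(2) aG]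
        ih DAreal.prems M by simp
  qed
next
  case (DRreal i \<phi>)
  show ?case unfolding tr.simps sat.simps
  proof (rule block_all)
    fix w M assume w: "\<forall>x. snd x \<noteq> n \<longrightarrow> w x = v x" and M: "M \<in> states_Gamma \<Gamma>" "enc \<Gamma> P w n M"
    have e: "enc \<Gamma> P w s S" using enc_other[OF w] DRreal.prems by blast
    have ih: "qeval w (tr \<Gamma> P (Suc n) n \<phi>) = sat (states_Gamma \<Gamma>) M \<phi>"
      by (rule DRreal.IH) (use DRreal.prems M in auto)
    show "qeval w (QImp (QAnd (tr \<Gamma> P (Suc n) n \<phi>) (Erel \<Gamma> i s n)) (Rrel \<Gamma> i s n)) =
          (sat (states_Gamma \<Gamma>) M \<phi> \<and> relE i S M \<longrightarrow> relR i S M)"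
      using Rrel_correct[OF DRreal.prems(3) M(1) e M(2) aG] Erel_correct[OF DRreal.prems(3) M(1) e M(2) aG]
        ih DRreal.prems M by simp
  qed
next
  case (DProg \<pi> \<phi>)
  have a1: "set (atoms_prog \<pi>) \<subseteq> set P" and a2: "set (atoms_dyn \<phi>) \<subseteq> set P" using DProg.prems by auto
  have "qeval v (tr \<Gamma> P n s (DProg \<pi> \<phi>)) =
    (\<forall>M\<in>states_Gamma \<Gamma>. (\<exists>T. step (states_Gamma \<Gamma>) \<pi> S T \<and> simS P T M) \<longrightarrow> sat (states_Gamma \<Gamma>) M \<phi>)"
    unfolding tr.simps
  proof (rule block_all)
    fix w M assume w: "\<forall>x. snd x \<noteq> n \<longrightarrow> w x = v x" and M: "M \<in> states_Gamma \<Gamma>" "enc \<Gamma> P w n M"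
    have e: "enc \<Gamma> P w s S" using enc_other[OF w] DProg.prems by blast
    have ih2: "qeval w (tr \<Gamma> P (Suc n) n \<phi>) = sat (states_Gamma \<Gamma>) M \<phi>"
      by (rule DProg.IH(2)) (use DProg.prems M a2 in auto)
    have ih1: "qeval w (trp \<Gamma> P (Suc n) s n \<pi>) = (\<exists>T. step (states_Gamma \<Gamma>) \<pi> S T \<and> simS P T M)"
      by (rule DProg.IH(1)) (use DProg.prems M a1 e in auto)
    show "qeval w (QImp (trp \<Gamma> P (Suc n) s n \<pi>) (tr \<Gamma> P (Suc n) n \<phi>)) =
         ((\<exists>T. step (states_Gamma \<Gamma>) \<pi> S T \<and> simS P T M) \<longrightarrow> sat (states_Gamma \<Gamma>) M \<phi>)"
      using ih1 ih2
        DProg.prems M e by simp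
  qed
  also have "\<dots> = (\<forall>M\<in>states_Gamma \<Gamma>. step (states_Gamma \<Gamma>) \<pi> S M \<longrightarrow> sat (states_Gamma \<Gamma>) M \<phi>)"
  proof (intro iffI ballI impI)
    fix M assume H: "\<forall>M\<in>states_Gamma \<Gamma>. (\<exists>T. step (states_Gamma \<Gamma>) \<pi> S T \<and> simS P T M) \<longrightarrow> sat (states_Gamma \<Gamma>) M \<phi>"
      and "M \<in> states_Gamma \<Gamma>" "step (states_Gamma \<Gamma>) \<pi> S M"
    then show "sat (states_Gamma \<Gamma>) M \<phi>" using simS_refl by blast
  next
    fix M assume H: "\<forall>M\<in>states_Gamma \<Gamma>. step (states_Gamma \<Gamma>) \<pi> S M \<longrightarrow> sat (states_Gamma \<Gamma>) M \<phi>"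
      and M: "M \<in> states_Gamma \<Gamma>" "\<exists>T. step (states_Gamma \<Gamma>) \<pi> S T \<and> simS P T M"
    then obtain T where T: "step (states_Gamma \<Gamma>) \<pi> S T" "simS P T M" by blast
    have "T \<in> states_Gamma \<Gamma>" using sim_U[OF T(2)] M(1) by simp
    then have "sat (states_Gamma \<Gamma>) T \<phi>" using H T(1) by blast
    then show "sat (states_Gamma \<Gamma>) M \<phi>" using sim_main(1)[OF a2 T(2)] by simp
  qed
  finally show ?case by simp
next
  case (PAdd i a)
  have inS: "fst S i \<subseteq> set (\<Gamma> i)" "fst S' i \<subseteq> set (\<Gamma> i)" using PAdd.prems(4,5) by (auto simp: states_Gamma_def)
  have "qeval v (trp \<Gamma> P n s s' (PAdd i a)) =
     ((\<forall>j. j \<noteq> i \<longrightarrow> fst S' j = fst S j) \<and> fst S' i = insert a (fst S i) \<and> snd S \<inter> set P = snd S' \<inter> set P)"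
    using eq_ag_correct[OF PAdd.prems(4,5,6,7)] eq_prop_correct[OF PAdd.prems(6,7)]
      eq_others_correct[OF PAdd.prems(6,7)] tri_correct[OF PAdd.prems(5,7)]
    by (simp add: in_enum eq_plus_def set_ins_sub[OF inS])
  also have "\<dots> = (\<exists>T. step (states_Gamma \<Gamma>) (PAdd i a) S T \<and> simS P T S')"
    unfolding step.simps step_sim_char unfolding upd_char by simp
  finally show ?case .
next
  case (PRem i a)
  have inS: "fst S i \<subseteq> set (\<Gamma> i)" "fst S' i \<subseteq> set (\<Gamma> i)" using PRem.prems(4,5) by (auto simp: states_Gamma_def)
  have aa: "(a \<in> set (\<Gamma> i) \<longrightarrow> a \<notin> fst S' i) = (a \<notin> fst S' i)" using inS by blast
  have "qeval v (trp \<Gamma> P n s s' (PRem i a)) =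
     ((\<forall>j. j \<noteq> i \<longrightarrow> fst S' j = fst S j) \<and> fst S' i = fst S i - {a} \<and> snd S \<inter> set P = snd S' \<inter> set P)"
    using eq_ag_correct[OF PRem.prems(4,5,6,7)] eq_prop_correct[OF PRem.prems(6,7)]
      eq_others_correct[OF PRem.prems(6,7)] tri_correct[OF PRem.prems(5,7)] inS
    using aa by (simp add: in_enum eq_minus_def set_rem_sub[OF inS])
  also have "\<dots> = (\<exists>T. step (states_Gamma \<Gamma>) (PRem i a) S T \<and> simS P T S')"
    unfolding step.simps step_sim_char unfolding upd_char by simp
  finally show ?case .
next
  case (PSeq p q)
  have a1: "set (atoms_prog p) \<subseteq> set P" and a2: "set (atoms_prog q) \<subseteq> set P" using PSeq.prems by auto
  have "qeval v (trp \<Gamma> P n s s' (PSeq p q)) = (\<exists>M\<in>states_Gamma \<Gamma>.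
      (\<exists>T. step (states_Gamma \<Gamma>) p S T \<and> simS P T M) \<and> (\<exists>T. step (states_Gamma \<Gamma>) q M T \<and> simS P T S'))"
    unfolding trp.simps
  proof (rule block_ex)
    fix w M assume w: "\<forall>x. snd x \<noteq> n \<longrightarrow> w x = v x" and M: "M \<in> states_Gamma \<Gamma>" "enc \<Gamma> P w n M"
    have e: "enc \<Gamma> P w s S" "enc \<Gamma> P w s' S'" using enc_other[OF w] PSeq.prems by blast+
    have ih1: "qeval w (trp \<Gamma> P (Suc n) s n p) = (\<exists>T. step (states_Gamma \<Gamma>) p S T \<and> simS P T M)"
      by (rule PSeq.IH(1)) (use PSeq.prems M a1 e in auto)
    have ih2: "qeval w (trp \<Gamma> P (Suc n) n s' q) = (\<exists>T. step (states_Gamma \<Gamma>) q M T \<and> simS P T S')"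
      by (rule PSeq.IH(2)) (use PSeq.prems M a2 e in auto)
    show "qeval w (QAnd (trp \<Gamma> P (Suc n) s n p) (trp \<Gamma> P (Suc n) n s' q)) =
      ((\<exists>T. step (states_Gamma \<Gamma>) p S T \<and> simS P T M) \<and> (\<exists>T. step (states_Gamma \<Gamma>) q M T \<and> simS P T S'))"
      using ih1 ih2
        PSeq.prems M e by simp
  qed
  also have "\<dots> = (\<exists>T. step (states_Gamma \<Gamma>) (PSeq p q) S T \<and> simS P T S')"
  proof (intro iffI)
    assume "\<exists>M\<in>states_Gamma \<Gamma>. (\<exists>T. step (states_Gamma \<Gamma>) p S T \<and> simS P T M) \<and> (\<exists>T. step (states_Gamma \<Gamma>) q M T \<and> simS P T S')"
    then obtain M T1 T where M: "M \<in> states_Gamma \<Gamma>" "step (states_Gamma \<Gamma>) p S T1" "simS P T1 M"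
      "step (states_Gamma \<Gamma>) q M T" "simS P T S'" by blast
    have "T1 \<in> states_Gamma \<Gamma>" using sim_U[OF M(3)] M(1) by simp
    obtain T' where T': "step (states_Gamma \<Gamma>) q T1 T'" "simS P T T'"
      using sim_main(2)[OF a2 simS_sym[OF M(3)] M(4)] by blast
    have "simS P T' S'" using simS_trans[OF simS_sym[OF T'(2)] M(5)] .
    then show "\<exists>T. step (states_Gamma \<Gamma>) (PSeq p q) S T \<and> simS P T S'"
      using T'(1) M(2) \<open>T1 \<in> states_Gamma \<Gamma>\<close> by (intro exI[of _ T']) auto
  next
    assume "\<exists>T. step (states_Gamma \<Gamma>) (PSeq p q) S T \<and> simS P T S'"
    then obtain T M where TM: "M \<in> states_Gamma \<Gamma>" "step (states_Gamma \<Gamma>) p S M" "step (states_Gamma \<Gamma>) q M T" "simS P T S'"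
      by (simp only: step.simps) blast
    have "(\<exists>T. step (states_Gamma \<Gamma>) p S T \<and> simS P T M) \<and> (\<exists>T. step (states_Gamma \<Gamma>) q M T \<and> simS P T S')"
      using TM simS_refl[of P M] by blast
    then show "\<exists>M\<in>states_Gamma \<Gamma>. (\<exists>T. step (states_Gamma \<Gamma>) p S T \<and> simS P T M) \<and> (\<exists>T. step (states_Gamma \<Gamma>) q M T \<and> simS P T S')"
      using TM(1) by blast
  qed
  finally show ?case .
next
  case (PChoice p q)
  have "(\<exists>T. step (states_Gamma \<Gamma>) (PChoice p q) S T \<and> simS P T S') =
    ((\<exists>T. step (states_Gamma \<Gamma>) p S T \<and> simS P T S') \<or> (\<exists>T. step (states_Gamma \<Gamma>) q S T \<and> simS P T S'))"
    by (simp only: step.simps) blast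
  then show ?case using PChoice.IH[OF _ PChoice.prems(2-7)] PChoice.prems(1) by simp
next
  case (PTest \<phi>)
  have "qeval v (trp \<Gamma> P n s s' (PTest \<phi>)) =
     ((\<forall>j. fst S' j = fst S j) \<and> snd S \<inter> set P = snd S' \<inter> set P \<and> sat (states_Gamma \<Gamma>) S \<phi>)"
    using eq_ag_correct[OF PTest.prems(4,5,6,7)] eq_prop_correct[OF PTest.prems(6,7)] PTest.IH[OF _ PTest.prems(2) PTest.prems(4) PTest.prems(6)] PTest.prems
    by (simp add: all_enum)
  also have "\<dots> = (\<exists>T. step (states_Gamma \<Gamma>) (PTest \<phi>) S T \<and> simS P T S')"
    unfolding step.simps test_sim_char by simp
  finally show ?case .
next
  case (DNeg \<phi>)
  then show ?case by simp
next
  case (DAnd \<phi> \<psi>)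
  then show ?case by simp
qed

lemma qands_lit: "(\<forall>f\<in>set (map (\<lambda>a. if a \<in> X then QVar (g a) else QNot (QVar (g a))) L). qeval w f) = (\<forall>a\<in>set L. w (g a) = (a \<in> X))"
  by (induction L) auto

lemma ball_concat: "(\<forall>f\<in>set (concat (map h L)). Q f) = (\<forall>i\<in>set L. \<forall>f\<in>set (h i). Q f)"
  by auto

lemma desc_correct: "qeval w (desc \<Gamma> P S 0) = enc \<Gamma> P w 0 S"
  unfolding desc_def enc_def qeval_qands set_append ball_Un ball_concat
  by (simp only: qands_lit all_enum)

theorem proposition3:
  fixes \<Gamma> :: "'agt::enum \<Rightarrow> 'agt fm0 list" and \<phi>0 :: "'agt dyn" and S0 :: "'agt state"
  assumes "S0 \<in> states_Gamma \<Gamma>"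
  shows "sat (states_Gamma \<Gamma>) S0 \<phi>0 \<longleftrightarrow> qbf_true (main_qbf \<Gamma> \<phi>0 S0)"
proof -
  define P where "P = Patoms \<Gamma> \<phi>0"
  have aG: "atomsG \<Gamma> P" unfolding atomsG_def P_def Patoms_def using UNIV_enum by fastforce
  have a0: "set (atoms_dyn \<phi>0) \<subseteq> set P" unfolding P_def Patoms_def by auto
  have "qeval v (main_qbf \<Gamma> \<phi>0 S0) = sat (states_Gamma \<Gamma>) S0 \<phi>0" for v
  proof -
    have "qeval v (main_qbf \<Gamma> \<phi>0 S0) = (\<exists>w. (\<forall>x. x \<notin> set (Xs \<Gamma> P 0) \<longrightarrow> w x = v x) \<and>
        enc \<Gamma> P w 0 S0 \<and> qeval w (tr \<Gamma> P 1 0 \<phi>0))"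
      unfolding main_qbf_def Let_def P_def[symmetric] qeval_qex_block by (simp add: desc_correct)
    also have "\<dots> = (\<exists>w. (\<forall>x. x \<notin> set (Xs \<Gamma> P 0) \<longrightarrow> w x = v x) \<and>
        enc \<Gamma> P w 0 S0 \<and> sat (states_Gamma \<Gamma>) S0 \<phi>0)"
      using tr_correct(1)[OF aG a0, of 0 1 S0] assms by auto
    also have "\<dots> = sat (states_Gamma \<Gamma>) S0 \<phi>0" using enc_exists[of \<Gamma> P 0 v S0] by blast
    finally show ?thesis .
  qed
  then show ?thesis unfolding qbf_true_def by blast
qed

end
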